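(* For every $n \geq 1$, the base change map $BC : \mathcal{A}_n^t(\mathbb{R}) \to \mathcal{A}_n^t(\mathbb{C})$ is a continuous proper map of locally compact Hausdorff spaces.
   Context: For $F = \mathbb{R}$ or $\mathbb{C}$, $\mathcal{A}_n^t(F)$ is the tempered dual of $GL(n,F)$, topologized via Harish-Chandra's parametrization as the disjoint union $\bigsqcup_{(M,\sigma)} X(M)/W_\sigma(M)$: here $M$ runs over standard (block-diagonal) Levi subgroups, ${}^0M \subset M$ is the subgroup where each diagonal block has determinant of absolute value $1$, $\sigma$ runs over representatives of $W(M)$-orbits of discrete series representations of ${}^0M$ ($W(M)=N(M)/M$), $W_\sigma(M)$ is the stabilizer of $\sigma$, and $X(M)$ is the group of unramified unitary characters of $M$ (those trivial on ${}^0M$); the point $\chi \in X(M)$ corresponds to the parabolically induced representation $i_{GL(n),MN}(\chi\sigma \otimes 1)$. Each $X(M)/W_\sigma(M)$ carries the quotient topology from $X(M) \cong \mathbb{R}^{m}$. For $F=\mathbb{R}$, Levi subgroups correspond to partitions $n = 2q+r$ into $q$ twos and $r$ ones, $M \cong GL(2,\mathbb{R})^q \times (\mathbb{R}^\times)^r$ and $X(M) \cong \mathbb{R}^{q+r}$ via $\mathrm{diag}(g_1,\dots,g_q,\omega_1,\dots,\omega_r)\mapsto \prod|\det g_i|^{it_i}\prod |\omega_j|^{it_{q+j}}$; for $F=\mathbb{C}$ only the diagonal torus $T\cong(\mathbb{C}^\times)^n$ contributes, with $X(T)\cong\mathbb{R}^n$. Base change $BC$ is the map of tempered duals corresponding,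 under the local Langlands correspondence, to restriction of L-parameters from the Weil group $W_{\mathbb{R}} = \mathbb{C}^\times \rtimes \mathbb{Z}/2\mathbb{Z}$ to $W_{\mathbb{C}} = \mathbb{C}^\times$. Explicitly, for unitary characters $\chi_1,\dots,\chi_q$ of $\mathbb{C}^\times$ with $\chi_i \neq \chi_i^\sigma$ (where $\chi^\sigma(z)=\chi(\bar z)$), each defining a discrete series representation $\pi(\chi_i)$ of $GL(2,\mathbb{R})$, and unitary characters $\xi_1,\dots,\xi_r$ of $\mathbb{R}^\times$, the generalized principal series $\pi = i_{GL(n,\mathbb{R}),MN}(\pi(\chi_1)\otimes\dots\otimes\pi(\chi_q)\otimes\xi_1\otimes\dots\otimes\xi_r\otimes 1)$ is sent to $BC(\pi) = i_{GL(n,\mathbb{C}),B(\mathbb{C})}(\chi_1,\chi_1^\sigma,\dots,\chi_q,\chi_q^\sigma,\xi_1\circ N,\dots,\xi_r\circ N)$, where $B(\mathbb{C})$ is the Borel subgroup and $N(z) = z\bar z$. For $n=1$, $BC(\chi) = \chi\circ N$. *)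

theory Defs
  imports "HOL-Analysis.Analysis"
begin

definition quotient_topology :: "'a topology \<Rightarrow> ('a \<Rightarrow> 'b) \<Rightarrow> 'b topology" where
  "quotient_topology X p =
     topology (\<lambda>U. U \<subseteq> p ` topspace X \<and> openin X {x \<in> topspace X. p x \<in> U})"

definition XM_top :: "nat \<Rightarrow> (nat \<Rightarrow> real) topology" where
  "XM_top m = product_topology (\<lambda>_. euclideanreal) {..<m}"

(* ---------------- F = R ----------------
   A standard Levi of GL(n,R) is given by (q,r) with 2q+r = n,
   M = GL(2,R)^q x (R^x)^r, X(M) = R^(q+r).
   A discrete series of 0M is given by (a,e):
     a i \<ge> 1 (i<q): the discrete series of 0GL(2,R) = SL^\<plusminus>(2,R) which is the
        restriction of pi(chi) with chi(z) = (z/|z|)^(a i) (and chi^sigma);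
     e j \<in> bool (j<r): the character sgn^(e j) of 0(R^x) = {\<plusminus>1}.
   The point ((q,r),(a,e)), t  with t \<in> R^(q+r) is chi sigma, chi(g,w) =
   prod |det g_i|^(i t_i) prod |w_j|^(i t_(q+j)). *)

definition levi_dataR :: "nat \<Rightarrow> ((nat \<times> nat) \<times> ((nat \<Rightarrow> nat) \<times> (nat \<Rightarrow> bool))) set" where
  "levi_dataR n = {((q,r),(a,e)). 2*q + r = n \<and> a \<in> {..<q} \<rightarrow>\<^sub>E {1..} \<and> e \<in> {..<r} \<rightarrow>\<^sub>E UNIV}"

definition preR_top :: "nat \<Rightarrow> (((nat \<times> nat) \<times> ((nat \<Rightarrow> nat) \<times> (nat \<Rightarrow> bool))) \<times> (nat \<Rightarrow> real)) topology" where
  "preR_top n = sum_topology (\<lambda>((q,r),_). XM_top (q+r)) (levi_dataR n)"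

(* the element (pi,rho) of W(M) = S_q x S_r, as a permutation of the coordinates {..<q+r} *)
definition block_perm :: "nat \<Rightarrow> nat \<Rightarrow> (nat \<Rightarrow> nat) \<Rightarrow> (nat \<Rightarrow> nat) \<Rightarrow> nat \<Rightarrow> nat" where
  "block_perm q r \<pi> \<rho> i = (if i < q then \<pi> i else if i < q + r then q + \<rho> (i - q) else i)"

definition WR_rel ::
  "(((nat \<times> nat) \<times> ((nat \<Rightarrow> nat) \<times> (nat \<Rightarrow> bool))) \<times> (nat \<Rightarrow> real)) \<Rightarrow>
   (((nat \<times> nat) \<times> ((nat \<Rightarrow> nat) \<times> (nat \<Rightarrow> bool))) \<times> (nat \<Rightarrow> real)) \<Rightarrow> bool" where
  "WR_rel x y = (case x of (((q,r),(a,e)),t) \<Rightarrow> case y of (((q',r'),(a',e')),t') \<Rightarrow>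
      q' = q \<and> r' = r \<and>
      (\<exists>\<pi> \<rho>. \<pi> permutes {..<q} \<and> \<rho> permutes {..<r} \<and>
              a' = a \<circ> \<pi> \<and> e' = e \<circ> \<rho> \<and> t' = t \<circ> block_perm q r \<pi> \<rho>))"

definition orbitR where "orbitR x = {y. WR_rel x y}"

(* tempered dual of GL(n,R): disjoint union over (M,sigma) of X(M)/W_sigma(M),
   realised as (disjoint union over (M,sigma) of X(M)) / W(M) *)
definition tempR :: "nat \<Rightarrow> (((nat \<times> nat) \<times> ((nat \<Rightarrow> nat) \<times> (nat \<Rightarrow> bool))) \<times> (nat \<Rightarrow> real)) set topology" where
  "tempR n = quotient_topology (preR_top n) orbitR"

(* ---------------- F = C ----------------
   Only M = T = (C^x)^n; discrete series of 0T = U(1)^n given by k \<in> Z^n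
   (omega \<mapsto> prod (omega_j/|omega_j|)^(k j)); X(T) = R^n, t \<mapsto> prod |omega_j|^(i t_j)
   (|.| the usual modulus). So (k,t) is the principal series induced from the
   characters z \<mapsto> (z/|z|)^(k j) |z|^(i t j). *)

definition levi_dataC :: "nat \<Rightarrow> (nat \<Rightarrow> int) set" where
  "levi_dataC n = {..<n} \<rightarrow>\<^sub>E UNIV"

definition preC_top :: "nat \<Rightarrow> ((nat \<Rightarrow> int) \<times> (nat \<Rightarrow> real)) topology" where
  "preC_top n = sum_topology (\<lambda>_. XM_top n) (levi_dataC n)"

definition WC_rel :: "nat \<Rightarrow> ((nat \<Rightarrow> int) \<times> (nat \<Rightarrow> real)) \<Rightarrow> ((nat \<Rightarrow> int) \<times> (nat \<Rightarrow> real)) \<Rightarrow> bool" where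
  "WC_rel n x y = (case x of (k,t) \<Rightarrow> case y of (k',t') \<Rightarrow>
      (\<exists>\<pi>. \<pi> permutes {..<n} \<and> k' = k \<circ> \<pi> \<and> t' = t \<circ> \<pi>))"

definition orbitC where "orbitC n x = {y. WC_rel n x y}"

definition tempC :: "nat \<Rightarrow> ((nat \<Rightarrow> int) \<times> (nat \<Rightarrow> real)) set topology" where
  "tempC n = quotient_topology (preC_top n) (orbitC n)"

(* ---------------- Base change ----------------
   GL(2,R)-block (a_i, t_i) is pi(chi) with chi(z) = (z/|z|)^(a_i) |z|^(2 i t_i), so it
   contributes chi, chi^sigma, i.e. (a_i, 2 t_i), (-a_i, 2 t_i);
   R^x-block (e_j, t) is xi = sgn^e |.|^(i t), and xi \<circ> N = |z|^(2 i t), i.e. (0, 2t). *)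

definition bc_pre ::
  "(((nat \<times> nat) \<times> ((nat \<Rightarrow> nat) \<times> (nat \<Rightarrow> bool))) \<times> (nat \<Rightarrow> real)) \<Rightarrow>
   ((nat \<Rightarrow> int) \<times> (nat \<Rightarrow> real))" where
  "bc_pre x = (case x of (((q,r),(a,e)),t) \<Rightarrow>
     ((\<lambda>i. if i < 2*q then (if even i then int (a (i div 2)) else - int (a (i div 2)))
           else if i < 2*q + r then 0 else undefined),
      (\<lambda>i. if i < 2*q then 2 * t (i div 2)
           else if i < 2*q + r then 2 * t (i - q) else undefined)))"

definition BC :: "nat \<Rightarrow> (((nat \<times> nat) \<times> ((nat \<Rightarrow> nat) \<times> (nat \<Rightarrow> bool))) \<times> (nat \<Rightarrow> real)) set \<Rightarrow>
                  ((nat \<Rightarrow> int) \<times> (nat \<Rightarrow> real)) set" where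
  "BC n X = {y. \<exists>x\<in>X. WC_rel n (bc_pre x) y}"

end

theory Submission
  imports Defs
begin

lemma openin_quotient_topology:
  "openin (quotient_topology X p) U \<longleftrightarrow> U \<subseteq> p ` topspace X \<and> openin X {x \<in> topspace X. p x \<in> U}"
proof -
  have "istopology (\<lambda>U. U \<subseteq> p ` topspace X \<and> openin X {x \<in> topspace X. p x \<in> U})"
    unfolding istopology_def
  proof (rule conjI; intro allI impI)
    fix S T assume S: "S \<subseteq> p ` topspace X \<and> openin X {x \<in> topspace X. p x \<in> S}"
      and T: "T \<subseteq> p ` topspace X \<and> openin X {x \<in> topspace X. p x \<in> T}"
    have "{x \<in> topspace X. p x \<in> S \<inter> T} = {x \<in> topspace X. p x \<in> S} \<inter> {x \<in> topspace X. p x \<in> T}" by auto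
    then show "S \<inter> T \<subseteq> p ` topspace X \<and> openin X {x \<in> topspace X. p x \<in> S \<inter> T}"
      using S T by auto
  next
    fix K assume K: "\<forall>U\<in>K. U \<subseteq> p ` topspace X \<and> openin X {x \<in> topspace X. p x \<in> U}"
    have "{x \<in> topspace X. p x \<in> \<Union>K} = (\<Union>U\<in>K. {x \<in> topspace X. p x \<in> U})" by auto
    then show "\<Union>K \<subseteq> p ` topspace X \<and> openin X {x \<in> topspace X. p x \<in> \<Union>K}"
      using K by auto
  qed
  then show ?thesis unfolding quotient_topology_def by simp
qed

lemma topspace_quotient_topology:
  "topspace (quotient_topology X p) = p ` topspace X"
proof
  have "openin (quotient_topology X p) (topspace (quotient_topology X p))" by simp
  then show "topspace (quotient_topology X p) \<subseteq> p ` topspace X"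
    unfolding openin_quotient_topology by (rule conjunct1)
  have e: "{x \<in> topspace X. p x \<in> p ` topspace X} = topspace X" by auto
  have "openin (quotient_topology X p) (p ` topspace X)"
    unfolding openin_quotient_topology e by simp
  then show "p ` topspace X \<subseteq> topspace (quotient_topology X p)"
    using openin_subset by blast
qed

lemma quotient_map_quotient_topology:
  "quotient_map X (quotient_topology X p) p"
  unfolding quotient_map_def topspace_quotient_topology openin_quotient_topology
  by simp

lemma continuous_map_from_sum:
  assumes "\<And>i. i \<in> I \<Longrightarrow> continuous_map (X i) Y (\<lambda>x. f (i, x))"
  shows "continuous_map (sum_topology X I) Y f"
  unfolding continuous_map_def
proof (intro conjI allI impI)
  show "f \<in> topspace (sum_topology X I) \<rightarrow> topspace Y"
    using assms by (auto simp: continuous_map_def Pi_iff)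
  fix U assume U: "openin Y U"
  show "openin (sum_topology X I) {x \<in> topspace (sum_topology X I). f x \<in> U}"
    unfolding openin_sum_topology
  proof (intro conjI ballI)
    fix i assume i: "i \<in> I"
    have "{x. (i, x) \<in> {x \<in> topspace (sum_topology X I). f x \<in> U}} = {x \<in> topspace (X i). f (i,x) \<in> U}"
      using i by auto
    then show "openin (X i) {x. (i, x) \<in> {x \<in> topspace (sum_topology X I). f x \<in> U}}"
      using assms[OF i] U by (simp add: openin_continuous_map_preimage)
  qed auto
qed

lemma Hausdorff_space_sum:
  assumes "\<And>i. i \<in> I \<Longrightarrow> Hausdorff_space (X i)"
  shows "Hausdorff_space (sum_topology X I)"
  unfolding Hausdorff_space_def
proof (intro allI impI)
  fix x y assume xy: "x \<in> topspace (sum_topology X I) \<and> y \<in> topspace (sum_topology X I) \<and> x \<noteq> y"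
  obtain i a j b where x: "x = (i,a)" and y: "y = (j,b)" by (cases x, cases y) auto
  have i: "i \<in> I" "a \<in> topspace (X i)" and j: "j \<in> I" "b \<in> topspace (X j)"
    using xy x y by auto
  show "\<exists>U V. openin (sum_topology X I) U \<and> openin (sum_topology X I) V \<and> x \<in> U \<and> y \<in> V \<and> disjnt U V"
  proof (cases "i = j")
    case True
    then have "a \<noteq> b" using xy x y by auto
    then obtain U V where UV: "openin (X i) U" "openin (X i) V" "a \<in> U" "b \<in> V" "disjnt U V"
      using assms[OF i(1)] i j True unfolding Hausdorff_space_def by blast
    have o1: "openin (sum_topology X I) (Pair i ` U)"
      using open_map_component_injection[OF i(1), of X] UV(1) unfolding open_map_def by blast
    have o2: "openin (sum_topology X I) (Pair i ` V)"
      using open_map_component_injection[OF i(1), of X] UV(2) unfolding open_map_def by blast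
    have d: "disjnt (Pair i ` U) (Pair i ` V)"
      using UV(5) unfolding disjnt_def by blast
    show ?thesis
      apply (rule exI[of _ "Pair i ` U"], rule exI[of _ "Pair i ` V"])
      using o1 o2 d UV(3,4) x y True by auto
  next
    case False
    have o1: "openin (sum_topology X I) (Pair i ` topspace (X i))"
      using open_map_component_injection[OF i(1), of X] unfolding open_map_def by blast
    have o2: "openin (sum_topology X I) (Pair j ` topspace (X j))"
      using open_map_component_injection[OF j(1), of X] unfolding open_map_def by blast
    have d: "disjnt (Pair i ` topspace (X i)) (Pair j ` topspace (X j))"
      using False unfolding disjnt_def by blast
    show ?thesis
      apply (rule exI[of _ "Pair i ` topspace (X i)"], rule exI[of _ "Pair j ` topspace (X j)"])
      using o1 o2 d i j x y by auto
  qed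
qed

lemma compactin_sum_Sigma:
  assumes "finite J" "J \<subseteq> I" "\<And>i. i \<in> J \<Longrightarrow> compactin (X i) (S i)"
  shows "compactin (sum_topology X I) (Sigma J S)"
proof -
  have "Sigma J S = (\<Union>i\<in>J. (\<lambda>x. (i,x)) ` S i)" by auto
  moreover have "compactin (sum_topology X I) ((\<lambda>x. (i,x)) ` S i)" if "i \<in> J" for i
    using image_compactin[OF assms(3)[OF that] continuous_map_component_injection[of i I X]] that assms(2)
    by auto
  ultimately show ?thesis
    using assms(1) by (auto intro!: compactin_Union)
qed

lemma quotient_finite_group:
  fixes X :: "'a topology" and p :: "'a \<Rightarrow> 'b" and G :: "('a \<Rightarrow> 'a) set"
  assumes finG: "finite G"
    and contG: "\<And>g. g \<in> G \<Longrightarrow> continuous_map X X g"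
    and invG: "\<And>g. g \<in> G \<Longrightarrow> \<exists>h\<in>G. \<forall>x\<in>topspace X. h (g x) = x \<and> g (h x) = x"
    and orb: "\<And>x y. x \<in> topspace X \<Longrightarrow> y \<in> topspace X \<Longrightarrow> p x = p y \<longleftrightarrow> (\<exists>g\<in>G. y = g x)"
    and HX: "Hausdorff_space X"
  shows "open_map X (quotient_topology X p) p \<and> Hausdorff_space (quotient_topology X p) \<and>
         (locally_compact_space X \<longrightarrow> locally_compact_space (quotient_topology X p))"
proof -
  let ?Q = "quotient_topology X p"
  have gtop: "g x \<in> topspace X" if "g \<in> G" "x \<in> topspace X" for g x
    using contG[OF that(1)] that(2) by (simp add: continuous_map_def Pi_iff)
  have img_open: "openin X (g ` U)" if g: "g \<in> G" and U: "openin X U" for g U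
  proof -
    obtain h where h: "h \<in> G" "\<forall>x\<in>topspace X. h (g x) = x \<and> g (h x) = x"
      using invG[OF g] by blast
    have Usub: "U \<subseteq> topspace X" using U openin_subset by blast
    have "g ` U = {y \<in> topspace X. h y \<in> U}"
    proof
      show "g ` U \<subseteq> {y \<in> topspace X. h y \<in> U}"
        using h Usub gtop[OF g] by auto
      show "{y \<in> topspace X. h y \<in> U} \<subseteq> g ` U"
      proof
        fix y assume "y \<in> {y \<in> topspace X. h y \<in> U}"
        then have "y = g (h y)" "h y \<in> U" using h by auto
        then show "y \<in> g ` U" by blast
      qed
    qed
    then show ?thesis
      using contG[OF h(1)] U by (simp add: openin_continuous_map_preimage)
  qed
  have om: "open_map X ?Q p"
    unfolding open_map_def
  proof (intro allI impI)
    fix U assume U: "openin X U"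
    have Usub: "U \<subseteq> topspace X" using U openin_subset by blast
    have "{x \<in> topspace X. p x \<in> p ` U} = (\<Union>g\<in>G. g ` U)"
    proof
      show "{x \<in> topspace X. p x \<in> p ` U} \<subseteq> (\<Union>g\<in>G. g ` U)"
      proof
        fix x assume "x \<in> {x \<in> topspace X. p x \<in> p ` U}"
        then obtain u where u: "u \<in> U" "p u = p x" "x \<in> topspace X" by auto
        then obtain g where "g \<in> G" "x = g u" using orb[of u x] Usub by auto
        then show "x \<in> (\<Union>g\<in>G. g ` U)" using u by auto
      qed
      show "(\<Union>g\<in>G. g ` U) \<subseteq> {x \<in> topspace X. p x \<in> p ` U}"
      proof
        fix x assume "x \<in> (\<Union>g\<in>G. g ` U)"
        then obtain g u where gu: "g \<in> G" "u \<in> U" "x = g u" by auto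
        then have "x \<in> topspace X" using gtop Usub by auto
        moreover have "p u = p x" using orb[of u x] gu Usub \<open>x \<in> topspace X\<close> by auto
        ultimately show "x \<in> {x \<in> topspace X. p x \<in> p ` U}" using gu by (metis (mono_tags, lifting) image_eqI mem_Collect_eq)
      qed
    qed
    moreover have "openin X (\<Union>g\<in>G. g ` U)"
      using img_open U by (intro openin_Union) auto
    ultimately show "openin ?Q (p ` U)"
      unfolding openin_quotient_topology using Usub by auto
  qed
  define R where "R = (\<Union>g\<in>G. {z \<in> topspace (prod_topology X X). snd z = g (fst z)})"
  have Rclosed: "closedin (prod_topology X X) R"
    unfolding R_def
  proof (intro closedin_Union)
    show "finite ((\<lambda>g. {z \<in> topspace (prod_topology X X). snd z = g (fst z)}) ` G)"
      using finG by simp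
    fix T assume "T \<in> (\<lambda>g. {z \<in> topspace (prod_topology X X). snd z = g (fst z)}) ` G"
    then obtain g where g: "g \<in> G" and T: "T = {z \<in> topspace (prod_topology X X). snd z = g (fst z)}" by auto
    have gc: "continuous_map (prod_topology X X) X (g \<circ> fst)"
      using contG[OF g] continuous_map_fst by (rule continuous_map_compose[rotated])
    show "closedin (prod_topology X X) T"
      unfolding T using closedin_continuous_maps_eq[OF HX continuous_map_snd gc]
      by simp
  qed
  have haus: "Hausdorff_space ?Q"
    unfolding Hausdorff_space_def topspace_quotient_topology
  proof (intro allI impI)
    fix P1 P2 assume H: "P1 \<in> p ` topspace X \<and> P2 \<in> p ` topspace X \<and> P1 \<noteq> P2"
    then obtain x1 x2 where x: "x1 \<in> topspace X" "x2 \<in> topspace X" "P1 = p x1" "P2 = p x2" by auto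
    have notR: "(x1, x2) \<notin> R"
    proof
      assume "(x1, x2) \<in> R"
      then obtain g where "g \<in> G" "x2 = g x1" unfolding R_def by auto
      then have "p x1 = p x2" using orb[of x1 x2] x by auto
      then show False using H x by auto
    qed
    have "openin (prod_topology X X) (topspace (prod_topology X X) - R)"
      using Rclosed by (metis closedin_def)
    moreover have "(x1, x2) \<in> topspace (prod_topology X X) - R" using notR x by auto
    ultimately have "\<exists>U V. openin X U \<and> openin X V \<and> x1 \<in> U \<and> x2 \<in> V \<and> U \<times> V \<subseteq> topspace (prod_topology X X) - R"
      using openin_prod_topology_alt[THEN iffD1, rule_format] by metis
    then obtain U V where UV: "openin X U" "openin X V" "x1 \<in> U" "x2 \<in> V"
        "U \<times> V \<subseteq> topspace (prod_topology X X) - R"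
      by blast
    have d: "disjnt (p ` U) (p ` V)"
      unfolding disjnt_def
    proof (rule ccontr)
      assume "p ` U \<inter> p ` V \<noteq> {}"
      then obtain u v where uv: "u \<in> U" "v \<in> V" "p u = p v" by auto
      have "u \<in> topspace X" "v \<in> topspace X" using uv UV openin_subset by blast+
      then obtain g where g: "g \<in> G" "v = g u" using orb[of u v] uv by auto
      then have "(u, v) \<in> R" unfolding R_def using \<open>u \<in> topspace X\<close> \<open>v \<in> topspace X\<close> by auto
      then show False using UV(5) uv by auto
    qed
    show "\<exists>U V. openin ?Q U \<and> openin ?Q V \<and> P1 \<in> U \<and> P2 \<in> V \<and> disjnt U V"
    proof (intro exI conjI)
      show "openin ?Q (p ` U)" using om UV(1) unfolding open_map_def by blast
      show "openin ?Q (p ` V)" using om UV(2) unfolding open_map_def by blast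
      show "P1 \<in> p ` U" using x(3) UV(3) by blast
      show "P2 \<in> p ` V" using x(4) UV(4) by blast
    qed (rule d)
  qed
  have "locally_compact_space ?Q" if "locally_compact_space X"
    using locally_compact_space_continuous_open_map_image[OF
        quotient_imp_continuous_map[OF quotient_map_quotient_topology] om
        topspace_quotient_topology[symmetric] that] .
  then show ?thesis using om haus by blast
qed

lemma topspace_XM [simp]: "topspace (XM_top m) = (\<Pi>\<^sub>E i\<in>{..<m}. UNIV)"
  by (simp add: XM_top_def)

lemma XM_Hausdorff: "Hausdorff_space (XM_top m)"
  unfolding XM_top_def by (simp add: Hausdorff_space_product_topology)

lemma XM_lc: "locally_compact_space (XM_top m)"
  unfolding XM_top_def
  by (simp add: locally_compact_space_product_topology locally_compact_space_euclidean)

lemma XM_proj: "j < m \<Longrightarrow> continuous_map (XM_top m) euclideanreal (\<lambda>t. t j)"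
  unfolding XM_top_def using continuous_map_product_projection[of j "{..<m}" "\<lambda>_. euclideanreal"]
  by simp

lemma XM_perm_cont:
  assumes "\<And>i. i < m \<Longrightarrow> \<beta> i < m" "\<And>i. m \<le> i \<Longrightarrow> \<beta> i = i"
  shows "continuous_map (XM_top m) (XM_top m) (\<lambda>t. t \<circ> \<beta>)"
  unfolding XM_top_def continuous_map_componentwise
proof (intro conjI ballI)
  show "(\<lambda>t. t \<circ> \<beta>) ` topspace (product_topology (\<lambda>_. euclideanreal) {..<m}) \<subseteq> extensional {..<m}"
    using assms(2) by (auto simp: extensional_def PiE_def)
  fix k assume "k \<in> {..<m}"
  then have "\<beta> k \<in> {..<m}" using assms(1) by auto
  then show "continuous_map (product_topology (\<lambda>_. euclideanreal) {..<m}) euclideanreal (\<lambda>x. (x \<circ> \<beta>) k)"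
    using continuous_map_product_projection[of "\<beta> k" "{..<m}" "\<lambda>_. euclideanreal"] by simp
qed

lemma topspace_preR:
  "((((q,r),(a,e)),t) \<in> topspace (preR_top n)) \<longleftrightarrow>
     2*q + r = n \<and> a \<in> {..<q} \<rightarrow>\<^sub>E {1..} \<and> e \<in> {..<r} \<rightarrow>\<^sub>E UNIV \<and> t \<in> (\<Pi>\<^sub>E i\<in>{..<q+r}. UNIV)"
  by (auto simp: preR_top_def levi_dataR_def)

lemma topspace_preC:
  "((k,t) \<in> topspace (preC_top n)) \<longleftrightarrow> k \<in> {..<n} \<rightarrow>\<^sub>E UNIV \<and> t \<in> (\<Pi>\<^sub>E i\<in>{..<n}. UNIV)"
  by (auto simp: preC_top_def levi_dataC_def)

lemma preR_Hausdorff: "Hausdorff_space (preR_top n)"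
  unfolding preR_top_def by (rule Hausdorff_space_sum) (auto simp: XM_Hausdorff)

lemma preR_lc: "locally_compact_space (preR_top n)"
  unfolding preR_top_def by (auto simp: locally_compact_space_sum_topology XM_lc)

lemma preC_Hausdorff: "Hausdorff_space (preC_top n)"
  unfolding preC_top_def by (rule Hausdorff_space_sum) (auto simp: XM_Hausdorff)

lemma preC_lc: "locally_compact_space (preC_top n)"
  unfolding preC_top_def by (auto simp: locally_compact_space_sum_topology XM_lc)

lemma bp_id: "block_perm q r id id = id"
  by (auto simp: block_perm_def fun_eq_iff)

lemma bp_comp:
  assumes "\<pi>' permutes {..<q}" "\<rho>' permutes {..<r}"
  shows "block_perm q r \<pi> \<rho> \<circ> block_perm q r \<pi>' \<rho>' = block_perm q r (\<pi> \<circ> \<pi>') (\<rho> \<circ> \<rho>')"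
proof
  fix i
  have a: "\<pi>' i < q" if "i < q" using permutes_in_image[OF assms(1)] that by auto
  have b: "\<rho>' (i - q) < r" if "i < q + r" "q \<le> i" using permutes_in_image[OF assms(2)] that by auto
  show "(block_perm q r \<pi> \<rho> \<circ> block_perm q r \<pi>' \<rho>') i = block_perm q r (\<pi> \<circ> \<pi>') (\<rho> \<circ> \<rho>') i"
    using a b by (auto simp: block_perm_def)
qed

lemma bp_range:
  assumes "\<pi> permutes {..<q}" "\<rho> permutes {..<r}" "i < q + r"
  shows "block_perm q r \<pi> \<rho> i < q + r"
proof -
  have a: "\<pi> i < q" if "i < q" using permutes_in_image[OF assms(1)] that by auto
  have b: "\<rho> (i - q) < r" if "i < q + r" "q \<le> i" using permutes_in_image[OF assms(2)] that by auto
  show ?thesis using a b assms(3) by (auto simp: block_perm_def)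
qed

lemma bp_out: "q + r \<le> i \<Longrightarrow> block_perm q r \<pi> \<rho> i = i"
  by (simp add: block_perm_def)

lemma WR_refl: "WR_rel x x"
proof -
  obtain q r a e t where x: "x = (((q,r),(a,e)),t)" by (metis prod.collapse)
  show ?thesis unfolding x WR_rel_def
    by (auto intro!: exI[of _ id] simp: bp_id)
qed

lemma WR_sym: "WR_rel x y \<Longrightarrow> WR_rel y x"
proof -
  assume H: "WR_rel x y"
  obtain q r a e t where x: "x = (((q,r),(a,e)),t)" by (metis prod.collapse)
  obtain q' r' a' e' t' where y: "y = (((q',r'),(a',e')),t')" by (metis prod.collapse)
  obtain \<pi> \<rho> where pr: "q' = q" "r' = r" "\<pi> permutes {..<q}" "\<rho> permutes {..<r}"
     "a' = a \<circ> \<pi>" "e' = e \<circ> \<rho>" "t' = t \<circ> block_perm q r \<pi> \<rho>"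
    using H unfolding x y WR_rel_def by auto
  have ip: "inv \<pi> permutes {..<q}" "inv \<rho> permutes {..<r}" using pr permutes_inv by blast+
  have "a = a' \<circ> inv \<pi>" using pr permutes_inv_o[OF pr(3)] by (simp add: o_assoc[symmetric])
  moreover have "e = e' \<circ> inv \<rho>" using pr permutes_inv_o[OF pr(4)] by (simp add: o_assoc[symmetric])
  moreover have "t = t' \<circ> block_perm q r (inv \<pi>) (inv \<rho>)"
    using pr bp_comp[OF ip, of \<pi> \<rho>] permutes_inv_o[OF pr(3)] permutes_inv_o[OF pr(4)]
    by (simp add: o_assoc[symmetric] bp_id)
  ultimately show "WR_rel y x" unfolding x y WR_rel_def using pr ip by auto
qed

lemma WR_trans: "WR_rel x y \<Longrightarrow> WR_rel y z \<Longrightarrow> WR_rel x z"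
proof -
  assume H1: "WR_rel x y" and H2: "WR_rel y z"
  obtain q r a e t where x: "x = (((q,r),(a,e)),t)" by (metis prod.collapse)
  obtain q' r' a' e' t' where y: "y = (((q',r'),(a',e')),t')" by (metis prod.collapse)
  obtain q'' r'' a'' e'' t'' where z: "z = (((q'',r''),(a'',e'')),t'')" by (metis prod.collapse)
  obtain \<pi> \<rho> where pr: "q' = q" "r' = r" "\<pi> permutes {..<q}" "\<rho> permutes {..<r}"
     "a' = a \<circ> \<pi>" "e' = e \<circ> \<rho>" "t' = t \<circ> block_perm q r \<pi> \<rho>"
    using H1 unfolding x y WR_rel_def by auto
  obtain \<pi>' \<rho>' where pr': "q'' = q" "r'' = r" "\<pi>' permutes {..<q}" "\<rho>' permutes {..<r}"
     "a'' = a' \<circ> \<pi>'" "e'' = e' \<circ> \<rho>'" "t'' = t' \<circ> block_perm q r \<pi>' \<rho>'"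
    using H2 pr unfolding y z WR_rel_def by auto
  have "t'' = t \<circ> block_perm q r (\<pi> \<circ> \<pi>') (\<rho> \<circ> \<rho>')"
    using pr pr' bp_comp[OF pr'(3,4), of \<pi> \<rho>] by (simp add: comp_assoc)
  moreover have "\<pi> \<circ> \<pi>' permutes {..<q}" "\<rho> \<circ> \<rho>' permutes {..<r}"
    using permutes_compose[OF pr'(3) pr(3)] permutes_compose[OF pr'(4) pr(4)] by auto
  ultimately show "WR_rel x z" unfolding x z WR_rel_def using pr pr'
    by (simp add: comp_assoc) blast
qed

lemma orbitR_eq: "orbitR x = orbitR y \<longleftrightarrow> WR_rel x y"
  unfolding orbitR_def using WR_refl WR_sym WR_trans by blast

lemma WC_refl: "WC_rel n x x"
  by (cases x) (auto simp: WC_rel_def intro!: exI[of _ id])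

lemma WC_sym: "WC_rel n x y \<Longrightarrow> WC_rel n y x"
proof -
  assume H: "WC_rel n x y"
  obtain k t where x: "x = (k,t)" by (metis prod.collapse)
  obtain k' t' where y: "y = (k',t')" by (metis prod.collapse)
  obtain \<pi> where p: "\<pi> permutes {..<n}" "k' = k \<circ> \<pi>" "t' = t \<circ> \<pi>"
    using H unfolding x y WC_rel_def by auto
  have "k = k' \<circ> inv \<pi>" "t = t' \<circ> inv \<pi>"
    using p permutes_inv_o[OF p(1)] by (simp_all add: o_assoc[symmetric])
  then show ?thesis unfolding x y WC_rel_def using permutes_inv[OF p(1)] by auto
qed

lemma WC_trans: "WC_rel n x y \<Longrightarrow> WC_rel n y z \<Longrightarrow> WC_rel n x z"
proof -
  assume H1: "WC_rel n x y" and H2: "WC_rel n y z"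
  obtain k t where x: "x = (k,t)" by (metis prod.collapse)
  obtain k' t' where y: "y = (k',t')" by (metis prod.collapse)
  obtain k'' t'' where z: "z = (k'',t'')" by (metis prod.collapse)
  obtain \<pi> where p: "\<pi> permutes {..<n}" "k' = k \<circ> \<pi>" "t' = t \<circ> \<pi>"
    using H1 unfolding x y WC_rel_def by auto
  obtain \<pi>' where p': "\<pi>' permutes {..<n}" "k'' = k' \<circ> \<pi>'" "t'' = t' \<circ> \<pi>'"
    using H2 unfolding y z WC_rel_def by auto
  show ?thesis unfolding x z WC_rel_def using p p'
    by (auto intro!: exI[of _ "\<pi> \<circ> \<pi>'"] permutes_compose simp: o_assoc)
qed

lemma orbitC_eq: "orbitC n x = orbitC n y \<longleftrightarrow> WC_rel n x y"
  unfolding orbitC_def using WC_refl WC_sym WC_trans by blast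

lemma PiE_comp_perm:
  assumes "f \<in> S \<rightarrow>\<^sub>E B" "\<pi> permutes S"
  shows "f \<circ> \<pi> \<in> S \<rightarrow>\<^sub>E B"
  using assms permutes_in_image[OF assms(2)] permutes_not_in[OF assms(2)]
  by (auto simp: PiE_iff extensional_def)

definition actR :: "nat \<Rightarrow> nat \<Rightarrow> (nat \<Rightarrow> nat) \<Rightarrow> (nat \<Rightarrow> nat) \<Rightarrow>
   (((nat \<times> nat) \<times> ((nat \<Rightarrow> nat) \<times> (nat \<Rightarrow> bool))) \<times> (nat \<Rightarrow> real)) \<Rightarrow>
   (((nat \<times> nat) \<times> ((nat \<Rightarrow> nat) \<times> (nat \<Rightarrow> bool))) \<times> (nat \<Rightarrow> real))" where
  "actR q r \<pi> \<rho> x = (case x of (((q',r'),(a,e)),t) \<Rightarrow>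
     if q' = q \<and> r' = r then (((q,r),(a \<circ> \<pi>, e \<circ> \<rho>)), t \<circ> block_perm q r \<pi> \<rho>) else x)"

definition GR :: "nat \<Rightarrow> ((((nat \<times> nat) \<times> ((nat \<Rightarrow> nat) \<times> (nat \<Rightarrow> bool))) \<times> (nat \<Rightarrow> real)) \<Rightarrow>
   (((nat \<times> nat) \<times> ((nat \<Rightarrow> nat) \<times> (nat \<Rightarrow> bool))) \<times> (nat \<Rightarrow> real))) set" where
  "GR n = (\<lambda>(q,r,\<pi>,\<rho>). actR q r \<pi> \<rho>) ` {(q,r,\<pi>,\<rho>). 2*q+r = n \<and> \<pi> permutes {..<q} \<and> \<rho> permutes {..<r}}"

lemma finite_GR: "finite (GR n)"
proof -
  have "{(q,r,\<pi>,\<rho>). 2*q+r = n \<and> \<pi> permutes {..<q} \<and> \<rho> permutes {..<r}} \<subseteq>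
        Sigma {..n} (\<lambda>q. Sigma {..n} (\<lambda>r. {\<pi>. \<pi> permutes {..<q}} \<times> {\<rho>. \<rho> permutes {..<r}}))"
    by auto
  moreover have "finite (Sigma {..n} (\<lambda>q. Sigma {..n} (\<lambda>r. {\<pi>. \<pi> permutes {..<q}} \<times> {\<rho>. \<rho> permutes {..<r}})))"
    by (intro finite_SigmaI finite_cartesian_product finite_permutations) auto
  ultimately show ?thesis unfolding GR_def by (meson finite_imageI finite_subset)
qed

lemma actR_cancel:
  assumes "\<pi>' permutes {..<q}" "\<rho>' permutes {..<r}" "\<pi> \<circ> \<pi>' = id" "\<rho> \<circ> \<rho>' = id"
  shows "actR q r \<pi>' \<rho>' (actR q r \<pi> \<rho> x) = x"
proof -
  obtain q' r' a e t where x: "x = (((q',r'),(a,e)),t)" by (metis prod.collapse)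
  have "t \<circ> block_perm q r \<pi> \<rho> \<circ> block_perm q r \<pi>' \<rho>' = t"
    using bp_comp[OF assms(1,2), of \<pi> \<rho>] assms(3,4) by (simp add: comp_assoc bp_id)
  then show ?thesis using assms(3,4) unfolding x actR_def by (simp add: comp_assoc)
qed

lemma actR_cont:
  assumes "\<pi> permutes {..<q}" "\<rho> permutes {..<r}"
  shows "continuous_map (preR_top n) (preR_top n) (actR q r \<pi> \<rho>)"
  unfolding preR_top_def
proof (rule continuous_map_from_sum)
  fix i assume i: "i \<in> levi_dataR n"
  obtain q' r' a e where iq: "i = ((q',r'),(a,e))" by (metis prod.collapse)
  let ?X = "\<lambda>((q, r), _). XM_top (q + r)"
  let ?S = "sum_topology ?X (levi_dataR n)"
  show "continuous_map (?X i) ?S (\<lambda>x. actR q r \<pi> \<rho> (i, x))"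
  proof (cases "q' = q \<and> r' = r")
    case True
    let ?i' = "((q,r),(a \<circ> \<pi>, e \<circ> \<rho>))"
    have ae: "a \<in> {..<q} \<rightarrow>\<^sub>E {1..}" "e \<in> {..<r} \<rightarrow>\<^sub>E UNIV" "2*q+r = n"
      using i True unfolding iq levi_dataR_def by auto
    have i': "?i' \<in> levi_dataR n"
      unfolding levi_dataR_def using PiE_comp_perm[OF ae(1) assms(1)] PiE_comp_perm[OF ae(2) assms(2)] ae(3)
      by simp
    have c1: "continuous_map (XM_top (q+r)) (XM_top (q+r)) (\<lambda>t. t \<circ> block_perm q r \<pi> \<rho>)"
      by (rule XM_perm_cont) (auto simp: bp_range[OF assms] bp_out)
    have c2: "continuous_map (XM_top (q+r)) ?S (\<lambda>x. (?i', x))"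
      using continuous_map_component_injection[OF i', of ?X] by simp
    have "continuous_map (XM_top (q+r)) ?S ((\<lambda>x. (?i', x)) \<circ> (\<lambda>t. t \<circ> block_perm q r \<pi> \<rho>))"
      using c1 c2 by (rule continuous_map_compose)
    moreover have "((\<lambda>x. (?i', x)) \<circ> (\<lambda>t. t \<circ> block_perm q r \<pi> \<rho>)) = (\<lambda>x. actR q r \<pi> \<rho> (i, x))"
      using True unfolding iq actR_def by (auto simp: fun_eq_iff)
    ultimately show ?thesis using True unfolding iq by simp
  next
    case False
    have "(\<lambda>x. actR q r \<pi> \<rho> (i, x)) = (\<lambda>x. (i,x))"
      using False unfolding iq actR_def by (auto simp: fun_eq_iff)
    then show ?thesis using continuous_map_component_injection[OF i, of ?X] by simp
  qed
qed

lemma GR_props: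
  "finite (GR n) \<and> (\<forall>g\<in>GR n. continuous_map (preR_top n) (preR_top n) g) \<and>
   (\<forall>g\<in>GR n. \<exists>h\<in>GR n. \<forall>x\<in>topspace (preR_top n). h (g x) = x \<and> g (h x) = x)"
proof (intro conjI ballI)
  show "finite (GR n)" by (rule finite_GR)
next
  fix g assume "g \<in> GR n"
  then obtain q r \<pi> \<rho> where g: "g = actR q r \<pi> \<rho>" "2*q+r = n" "\<pi> permutes {..<q}" "\<rho> permutes {..<r}"
    unfolding GR_def by auto
  show "continuous_map (preR_top n) (preR_top n) g" using g actR_cont by simp
next
  fix g assume "g \<in> GR n"
  then obtain q r \<pi> \<rho> where g: "g = actR q r \<pi> \<rho>" "2*q+r = n" "\<pi> permutes {..<q}" "\<rho> permutes {..<r}"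
    unfolding GR_def by auto
  have ip: "inv \<pi> permutes {..<q}" "inv \<rho> permutes {..<r}" using g permutes_inv by blast+
  have h: "actR q r (inv \<pi>) (inv \<rho>) \<in> GR n" unfolding GR_def using g ip by force
  have "\<forall>x. actR q r (inv \<pi>) (inv \<rho>) (g x) = x \<and> g (actR q r (inv \<pi>) (inv \<rho>) x) = x"
    unfolding g(1)
    using actR_cancel[OF ip permutes_inv_o(1)[OF g(3)] permutes_inv_o(1)[OF g(4)]]
          actR_cancel[OF g(3,4) permutes_inv_o(2)[OF g(3)] permutes_inv_o(2)[OF g(4)]] by blast
  then show "\<exists>h\<in>GR n. \<forall>x\<in>topspace (preR_top n). h (g x) = x \<and> g (h x) = x"
    using h by blast
qed

lemma GR_orbit:
  assumes "x \<in> topspace (preR_top n)" "y \<in> topspace (preR_top n)"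
  shows "orbitR x = orbitR y \<longleftrightarrow> (\<exists>g\<in>GR n. y = g x)"
proof -
  obtain q r a e t where x: "x = (((q,r),(a,e)),t)" by (metis prod.collapse)
  have n: "2*q + r = n" using assms(1) unfolding x topspace_preR by auto
  show ?thesis unfolding orbitR_eq
  proof
    assume "WR_rel x y"
    then obtain \<pi> \<rho> where pr: "\<pi> permutes {..<q}" "\<rho> permutes {..<r}"
      "y = (((q,r),(a \<circ> \<pi>, e \<circ> \<rho>)), t \<circ> block_perm q r \<pi> \<rho>)"
      unfolding x WR_rel_def by (auto split: prod.splits)
    have "actR q r \<pi> \<rho> \<in> GR n" unfolding GR_def using pr n by force
    moreover have "y = actR q r \<pi> \<rho> x" using pr unfolding x actR_def by simp
    ultimately show "\<exists>g\<in>GR n. y = g x" by blast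
  next
    assume "\<exists>g\<in>GR n. y = g x"
    then obtain q0 r0 \<pi> \<rho> where g: "y = actR q0 r0 \<pi> \<rho> x" "\<pi> permutes {..<q0}" "\<rho> permutes {..<r0}"
      unfolding GR_def by auto
    show "WR_rel x y"
    proof (cases "q = q0 \<and> r = r0")
      case True
      then show ?thesis using g unfolding x actR_def WR_rel_def by auto
    next
      case False
      then have "y = x" using g unfolding x actR_def by auto
      then show ?thesis using WR_refl by simp
    qed
  qed
qed

definition actC :: "(nat \<Rightarrow> nat) \<Rightarrow> ((nat \<Rightarrow> int) \<times> (nat \<Rightarrow> real)) \<Rightarrow> ((nat \<Rightarrow> int) \<times> (nat \<Rightarrow> real))" where
  "actC \<pi> x = (case x of (k,t) \<Rightarrow> (k \<circ> \<pi>, t \<circ> \<pi>))"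

definition GC :: "nat \<Rightarrow> (((nat \<Rightarrow> int) \<times> (nat \<Rightarrow> real)) \<Rightarrow> ((nat \<Rightarrow> int) \<times> (nat \<Rightarrow> real))) set" where
  "GC n = actC ` {\<pi>. \<pi> permutes {..<n}}"

lemma actC_cont:
  assumes "\<pi> permutes {..<n}"
  shows "continuous_map (preC_top n) (preC_top n) (actC \<pi>)"
  unfolding preC_top_def
proof (rule continuous_map_from_sum)
  fix k assume k: "k \<in> levi_dataC n"
  let ?X = "\<lambda>_::nat\<Rightarrow>int. XM_top n"
  let ?S = "sum_topology ?X (levi_dataC n)"
  have k': "k \<circ> \<pi> \<in> levi_dataC n" using k assms unfolding levi_dataC_def by (rule PiE_comp_perm)
  have c1: "continuous_map (XM_top n) (XM_top n) (\<lambda>t. t \<circ> \<pi>)"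
    by (rule XM_perm_cont) (auto simp: permutes_not_in[OF assms] permutes_in_image[OF assms, simplified])
  have c2: "continuous_map (XM_top n) ?S (\<lambda>x. (k \<circ> \<pi>, x))"
    using continuous_map_component_injection[OF k', of ?X] by simp
  have "continuous_map (XM_top n) ?S ((\<lambda>x. (k \<circ> \<pi>, x)) \<circ> (\<lambda>t. t \<circ> \<pi>))"
    using c1 c2 by (rule continuous_map_compose)
  moreover have "((\<lambda>x. (k \<circ> \<pi>, x)) \<circ> (\<lambda>t. t \<circ> \<pi>)) = (\<lambda>x. actC \<pi> (k, x))"
    unfolding actC_def by (auto simp: fun_eq_iff)
  ultimately show "continuous_map (?X k) ?S (\<lambda>x. actC \<pi> (k, x))" by simp
qed

lemma GC_props:
  "finite (GC n) \<and> (\<forall>g\<in>GC n. continuous_map (preC_top n) (preC_top n) g) \<and>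
   (\<forall>g\<in>GC n. \<exists>h\<in>GC n. \<forall>x\<in>topspace (preC_top n). h (g x) = x \<and> g (h x) = x)"
proof (intro conjI ballI)
  show "finite (GC n)" unfolding GC_def by (simp add: finite_permutations)
next
  fix g assume "g \<in> GC n"
  then obtain \<pi> where g: "g = actC \<pi>" "\<pi> permutes {..<n}" unfolding GC_def by auto
  show "continuous_map (preC_top n) (preC_top n) g" using g actC_cont by simp
next
  fix g assume "g \<in> GC n"
  then obtain \<pi> where g: "g = actC \<pi>" "\<pi> permutes {..<n}" unfolding GC_def by auto
  have ip: "inv \<pi> permutes {..<n}" using g permutes_inv by blast
  have h: "actC (inv \<pi>) \<in> GC n" unfolding GC_def using ip by blast
  have "\<forall>x. actC (inv \<pi>) (g x) = x \<and> g (actC (inv \<pi>) x) = x"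
    unfolding g(1) actC_def
    using permutes_inv_o[OF g(2)] by (auto simp: comp_assoc split: prod.splits)
  then show "\<exists>h\<in>GC n. \<forall>x\<in>topspace (preC_top n). h (g x) = x \<and> g (h x) = x"
    using h by blast
qed

lemma GC_orbit:
  shows "orbitC n x = orbitC n y \<longleftrightarrow> (\<exists>g\<in>GC n. y = g x)"
  unfolding orbitC_eq GC_def WC_rel_def actC_def by (auto split: prod.splits)

lemma tempR_props:
  "open_map (preR_top n) (tempR n) orbitR \<and> Hausdorff_space (tempR n) \<and> locally_compact_space (tempR n)"
  using quotient_finite_group[of "GR n" "preR_top n" orbitR] GR_props[of n] GR_orbit[of _ n]
    preR_Hausdorff[of n] preR_lc[of n] unfolding tempR_def by blast

lemma tempC_props:
  "open_map (preC_top n) (tempC n) (orbitC n) \<and> Hausdorff_space (tempC n) \<and> locally_compact_space (tempC n)"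
  using quotient_finite_group[of "GC n" "preC_top n" "orbitC n"] GC_props[of n] GC_orbit[of n]
    preC_Hausdorff[of n] preC_lc[of n] unfolding tempC_def by blast

definition sigma :: "nat \<Rightarrow> nat \<Rightarrow> (nat \<Rightarrow> nat) \<Rightarrow> (nat \<Rightarrow> nat) \<Rightarrow> nat \<Rightarrow> nat" where
  "sigma q r \<pi> \<rho> i = (if i < 2*q then 2 * \<pi> (i div 2) + i mod 2
                        else if i < 2*q + r then 2*q + \<rho> (i - 2*q) else i)"

lemma sigma_low:
  assumes "\<pi> permutes {..<q}" "i < 2*q"
  shows "sigma q r \<pi> \<rho> i < 2*q \<and> (even (sigma q r \<pi> \<rho> i) \<longleftrightarrow> even i) \<and>
         sigma q r \<pi> \<rho> i div 2 = \<pi> (i div 2)"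
proof -
  have "i div 2 < q" using assms(2) by auto
  then have p: "\<pi> (i div 2) < q" using permutes_in_image[OF assms(1)] by auto
  have s: "sigma q r \<pi> \<rho> i = 2 * \<pi> (i div 2) + i mod 2" using assms(2) by (simp add: sigma_def)
  show ?thesis unfolding s using p by (auto; presburger)
qed

lemma sigma_mid:
  assumes "\<rho> permutes {..<r}" "2*q \<le> i" "i < 2*q + r"
  shows "sigma q r \<pi> \<rho> i = 2*q + \<rho> (i - 2*q) \<and> 2*q \<le> sigma q r \<pi> \<rho> i \<and> sigma q r \<pi> \<rho> i < 2*q + r"
proof -
  have "i - 2*q < r" using assms by auto
  then have p: "\<rho> (i - 2*q) < r" using permutes_in_image[OF assms(1)] by auto
  show ?thesis using assms p by (simp add: sigma_def)
qed

lemma sigma_high: "2*q + r \<le> i \<Longrightarrow> sigma q r \<pi> \<rho> i = i"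
  by (simp add: sigma_def)

lemma sigma_permutes:
  assumes "\<pi> permutes {..<q}" "\<rho> permutes {..<r}"
  shows "sigma q r \<pi> \<rho> permutes {..<2*q+r}"
proof (rule bij_imp_permutes)
  let ?s = "sigma q r \<pi> \<rho>"
  show "\<And>x. x \<notin> {..<2 * q + r} \<Longrightarrow> ?s x = x" using sigma_high by auto
  have sub: "?s ` {..<2*q+r} \<subseteq> {..<2*q+r}"
  proof
    fix y assume "y \<in> ?s ` {..<2*q+r}"
    then obtain i where i: "i < 2*q+r" "y = ?s i" by auto
    show "y \<in> {..<2*q+r}"
    proof (cases "i < 2*q")
      case True then show ?thesis using sigma_low[OF assms(1) True, of r \<rho>] i by auto
    next
      case False then show ?thesis using sigma_mid[OF assms(2), of q i \<pi>] i by auto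
    qed
  qed
  have inj: "inj_on ?s {..<2*q+r}"
  proof (rule inj_onI)
    fix i j assume i: "i \<in> {..<2*q+r}" and j: "j \<in> {..<2*q+r}" and eq: "?s i = ?s j"
    show "i = j"
    proof (cases "i < 2*q")
      case Ti: True
      note li = sigma_low[OF assms(1) Ti, of r \<rho>]
      show ?thesis
      proof (cases "j < 2*q")
        case Tj: True
        note lj = sigma_low[OF assms(1) Tj, of r \<rho>]
        have "\<pi> (i div 2) = \<pi> (j div 2)" using li lj eq by simp
        then have d: "i div 2 = j div 2" using permutes_inj[OF assms(1)] by (simp add: inj_eq)
        have "even i \<longleftrightarrow> even j" using li lj eq by simp
        then have "i mod 2 = j mod 2" by presburger
        then show ?thesis using d by (metis div_mult_mod_eq)
      next
        case False
        then show ?thesis using li sigma_mid[OF assms(2), of q j \<pi>] j eq by auto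
      qed
    next
      case Fi: False
      note mi = sigma_mid[OF assms(2), of q i \<pi>]
      show ?thesis
      proof (cases "j < 2*q")
        case Tj: True
        then show ?thesis using mi sigma_low[OF assms(1) Tj, of r \<rho>] i Fi eq by auto
      next
        case False
        note mj = sigma_mid[OF assms(2), of q j \<pi>]
        have "\<rho> (i - 2*q) = \<rho> (j - 2*q)" using mi mj i j Fi False eq by auto
        then have "i - 2*q = j - 2*q" using permutes_inj[OF assms(2)] by (simp add: inj_eq)
        then show ?thesis using Fi False by auto
      qed
    qed
  qed
  show "bij_betw ?s {..<2*q+r} {..<2*q+r}"
    unfolding bij_betw_def using inj endo_inj_surj[OF _ sub inj] by auto
qed

lemma bc_pre_act:
  assumes "\<pi> permutes {..<q}" "\<rho> permutes {..<r}"
  shows "bc_pre (((q,r),(a \<circ> \<pi>, e \<circ> \<rho>)), t \<circ> block_perm q r \<pi> \<rho>) =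
         actC (sigma q r \<pi> \<rho>) (bc_pre (((q,r),(a,e)),t))"
proof -
  let ?s = "sigma q r \<pi> \<rho>"
  have k: "(if i < 2*q then (if even i then int ((a \<circ> \<pi>) (i div 2)) else - int ((a \<circ> \<pi>) (i div 2)))
           else if i < 2*q + r then 0 else undefined) =
        (if ?s i < 2*q then (if even (?s i) then int (a (?s i div 2)) else - int (a (?s i div 2)))
           else if ?s i < 2*q + r then 0 else undefined)" for i
  proof (cases "i < 2*q")
    case True
    then show ?thesis using sigma_low[OF assms(1) True, of r \<rho>] by simp
  next
    case F: False
    show ?thesis
    proof (cases "i < 2*q + r")
      case True
      then show ?thesis using sigma_mid[OF assms(2), of q i \<pi>] F by simp
    next
      case False
      then show ?thesis using sigma_high[of q r i] F by simp
    qed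
  qed
  have tt: "(if i < 2*q then 2 * (t \<circ> block_perm q r \<pi> \<rho>) (i div 2)
           else if i < 2*q + r then 2 * (t \<circ> block_perm q r \<pi> \<rho>) (i - q) else undefined) =
        (if ?s i < 2*q then 2 * t (?s i div 2)
           else if ?s i < 2*q + r then 2 * t (?s i - q) else undefined)" for i
  proof (cases "i < 2*q")
    case True
    have "i div 2 < q" using True by auto
    then have "block_perm q r \<pi> \<rho> (i div 2) = \<pi> (i div 2)" by (simp add: block_perm_def)
    then show ?thesis using sigma_low[OF assms(1) True, of r \<rho>] True by simp
  next
    case F: False
    show ?thesis
    proof (cases "i < 2*q + r")
      case True
      have f: "\<not> i - q < q" "i - q < q + r" "i - q - q = i - 2*q" using F True by auto
      have "block_perm q r \<pi> \<rho> (i - q) = q + \<rho> (i - 2*q)"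
        using f unfolding block_perm_def by simp
      moreover have "2 * q + \<rho> (i - 2 * q) - q = q + \<rho> (i - 2*q)" by simp
      ultimately show ?thesis using sigma_mid[OF assms(2), of q i \<pi>] F True by simp
    next
      case False
      then show ?thesis using sigma_high[of q r i] F by simp
    qed
  qed
  show ?thesis
    unfolding bc_pre_def actC_def using k tt by (simp add: fun_eq_iff)
qed

lemma WR_bc:
  assumes "WR_rel x y" "x \<in> topspace (preR_top n)"
  shows "WC_rel n (bc_pre x) (bc_pre y)"
proof -
  obtain q r a e t where x: "x = (((q,r),(a,e)),t)" by (metis prod.collapse)
  have n: "2*q + r = n" using assms(2) unfolding x topspace_preR by auto
  obtain \<pi> \<rho> where pr: "\<pi> permutes {..<q}" "\<rho> permutes {..<r}"
      "y = (((q,r),(a \<circ> \<pi>, e \<circ> \<rho>)), t \<circ> block_perm q r \<pi> \<rho>)"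
    using assms(1) unfolding x WR_rel_def by (auto split: prod.splits)
  have "bc_pre y = actC (sigma q r \<pi> \<rho>) (bc_pre x)"
    unfolding pr(3) x by (rule bc_pre_act[OF pr(1,2)])
  then show ?thesis
    using sigma_permutes[OF pr(1,2)] n unfolding WC_rel_def actC_def
    by (auto split: prod.splits)
qed

lemma BC_orbit:
  assumes "x \<in> topspace (preR_top n)"
  shows "BC n (orbitR x) = orbitC n (bc_pre x)"
proof
  show "BC n (orbitR x) \<subseteq> orbitC n (bc_pre x)"
  proof
    fix y assume "y \<in> BC n (orbitR x)"
    then obtain x' where "WR_rel x x'" "WC_rel n (bc_pre x') y" unfolding BC_def orbitR_def by auto
    then show "y \<in> orbitC n (bc_pre x)"
      using WR_bc[OF _ assms] WC_trans unfolding orbitC_def by blast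
  qed
  show "orbitC n (bc_pre x) \<subseteq> BC n (orbitR x)"
    unfolding BC_def orbitR_def orbitC_def using WR_refl by blast
qed

lemma bc_pre_cont: "continuous_map (preR_top n) (preC_top n) bc_pre"
  unfolding preR_top_def
proof (rule continuous_map_from_sum)
  fix i assume i: "i \<in> levi_dataR n"
  obtain q r a e where iq: "i = ((q,r),(a,e))" by (metis prod.collapse)
  have n: "2*q + r = n" using i unfolding iq levi_dataR_def by auto
  let ?X = "\<lambda>((q, r), _). XM_top (q + r)"
  define K :: "nat \<Rightarrow> int" where "K = (\<lambda>i. if i < 2*q then (if even i then int (a (i div 2)) else - int (a (i div 2)))
           else if i < 2*q + r then 0 else undefined)"
  define T :: "(nat \<Rightarrow> real) \<Rightarrow> nat \<Rightarrow> real" where "T = (\<lambda>t i. if i < 2*q then 2 * t (i div 2)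
           else if i < 2*q + r then 2 * t (i - q) else undefined)"
  have K: "K \<in> levi_dataC n" unfolding levi_dataC_def K_def using n by (auto simp: PiE_iff extensional_def)
  have cT: "continuous_map (XM_top (q+r)) (XM_top n) T"
    unfolding XM_top_def continuous_map_componentwise
  proof (intro conjI ballI)
    show "T ` topspace (product_topology (\<lambda>_. euclideanreal) {..<q + r}) \<subseteq> extensional {..<n}"
      unfolding T_def using n by (auto simp: extensional_def)
    fix j assume j: "j \<in> {..<n}"
    show "continuous_map (product_topology (\<lambda>_. euclideanreal) {..<q + r}) euclideanreal (\<lambda>x. T x j)"
    proof (cases "j < 2*q")
      case True
      have "j div 2 < q + r" using True by auto
      then have "continuous_map (XM_top (q+r)) euclideanreal (\<lambda>x. 2 * x (j div 2))"
        by (intro continuous_map_real_mult_left XM_proj)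
      then show ?thesis unfolding T_def XM_top_def using True by simp
    next
      case False
      have "j - q < q + r" using False j n by auto
      then have "continuous_map (XM_top (q+r)) euclideanreal (\<lambda>x. 2 * x (j - q))"
        by (intro continuous_map_real_mult_left XM_proj)
      then show ?thesis unfolding T_def XM_top_def using False j n by simp
    qed
  qed
  have c2: "continuous_map (XM_top n) (preC_top n) (\<lambda>x. (K, x))"
    unfolding preC_top_def using continuous_map_component_injection[OF K, of "\<lambda>_. XM_top n"] by simp
  have "continuous_map (XM_top (q+r)) (preC_top n) ((\<lambda>x. (K, x)) \<circ> T)"
    using cT c2 by (rule continuous_map_compose)
  moreover have "((\<lambda>x. (K, x)) \<circ> T) = (\<lambda>x. bc_pre (i, x))"
    unfolding iq bc_pre_def K_def T_def by (simp add: fun_eq_iff)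
  ultimately show "continuous_map (?X i) (preC_top n) (\<lambda>x. bc_pre (i, x))"
    unfolding iq by simp
qed

definition phiC :: "nat \<Rightarrow> ((nat \<Rightarrow> int) \<times> (nat \<Rightarrow> real)) \<Rightarrow> real" where
  "phiC n x = (\<Sum>j<n. \<bar>real_of_int (fst x j)\<bar> + \<bar>snd x j\<bar>)"

definition psiC :: "nat \<Rightarrow> ((nat \<Rightarrow> int) \<times> (nat \<Rightarrow> real)) set \<Rightarrow> real" where
  "psiC n Y = phiC n (SOME y. y \<in> Y)"

lemma phiC_inv: "WC_rel n x y \<Longrightarrow> phiC n y = phiC n x"
proof -
  assume H: "WC_rel n x y"
  obtain k t where x: "x = (k,t)" by (metis prod.collapse)
  obtain k' t' where y: "y = (k',t')" by (metis prod.collapse)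
  obtain \<pi> where p: "\<pi> permutes {..<n}" "k' = k \<circ> \<pi>" "t' = t \<circ> \<pi>"
    using H unfolding x y WC_rel_def by auto
  have "(\<Sum>j<n. \<bar>real_of_int (k (\<pi> j))\<bar> + \<bar>t (\<pi> j)\<bar>) = (\<Sum>j<n. \<bar>real_of_int (k j)\<bar> + \<bar>t j\<bar>)"
    using sum.reindex_bij_betw[OF permutes_imp_bij[OF p(1)], of "\<lambda>j. \<bar>real_of_int (k j)\<bar> + \<bar>t j\<bar>"] .
  then show ?thesis unfolding phiC_def x y p by simp
qed

lemma psiC_orbit: "psiC n (orbitC n x) = phiC n x"
proof -
  have "x \<in> orbitC n x" unfolding orbitC_def using WC_refl by simp
  then have "(SOME y. y \<in> orbitC n x) \<in> orbitC n x" by (rule someI)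
  then show ?thesis unfolding psiC_def orbitC_def using phiC_inv by simp
qed

lemma phiC_cont: "continuous_map (preC_top n) euclideanreal (phiC n)"
  unfolding preC_top_def
proof (rule continuous_map_from_sum)
  fix k assume "k \<in> levi_dataC n"
  have "continuous_map (XM_top n) euclideanreal (\<lambda>t. \<Sum>j<n. \<bar>real_of_int (k j)\<bar> + \<bar>t j\<bar>)"
    by (intro continuous_map_sum continuous_map_add continuous_map_const[THEN iffD2] continuous_map_real_abs XM_proj)
       auto
  then show "continuous_map ((\<lambda>_. XM_top n) k) euclideanreal (\<lambda>x. phiC n (k, x))"
    unfolding phiC_def by simp
qed

theorem main_result:
  fixes n :: nat
  shows "locally_compact_space (tempR n) \<and> Hausdorff_space (tempR n) \<and>
         locally_compact_space (tempC n) \<and> Hausdorff_space (tempC n) \<and>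
         continuous_map (tempR n) (tempC n) (BC n) \<and>
         proper_map (tempR n) (tempC n) (BC n) \<and>
         (\<forall>K. compactin (tempC n) K \<longrightarrow>
              compactin (tempR n) {x \<in> topspace (tempR n). BC n x \<in> K})"
proof -
  have qR: "quotient_map (preR_top n) (tempR n) orbitR"
    unfolding tempR_def by (rule quotient_map_quotient_topology)
  have qC: "quotient_map (preC_top n) (tempC n) (orbitC n)"
    unfolding tempC_def by (rule quotient_map_quotient_topology)
  have topR: "topspace (tempR n) = orbitR ` topspace (preR_top n)"
    unfolding tempR_def by (rule topspace_quotient_topology)
  have R: "Hausdorff_space (tempR n)" "locally_compact_space (tempR n)" using tempR_props by blast+
  have C: "Hausdorff_space (tempC n)" "locally_compact_space (tempC n)" using tempC_props by blast+
  have cC: "continuous_map (preR_top n) (tempC n) (orbitC n \<circ> bc_pre)"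
    using bc_pre_cont quotient_imp_continuous_map[OF qC] by (rule continuous_map_compose)
  have "continuous_map (preR_top n) (tempC n) (BC n \<circ> orbitR)"
    using cC by (rule continuous_map_eq) (simp add: BC_orbit)
  then have cont: "continuous_map (tempR n) (tempC n) (BC n)"
    using continuous_compose_quotient_map[OF qR] by blast
  have "continuous_map (preC_top n) euclideanreal (psiC n \<circ> orbitC n)"
    using phiC_cont by (rule continuous_map_eq) (simp add: psiC_orbit)
  then have cpsi: "continuous_map (tempC n) euclideanreal (psiC n)"
    using continuous_compose_quotient_map[OF qC] by blast
  have comp: "compactin (tempR n) {x \<in> topspace (tempR n). BC n x \<in> K}" if K: "compactin (tempC n) K" for K
  proof -
    have "compactin euclideanreal (psiC n ` K)" using image_compactin[OF K cpsi] .
    then have "bounded (psiC n ` K)" by (simp add: compact_imp_bounded)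
    then obtain B where B: "\<And>Y. Y \<in> K \<Longrightarrow> \<bar>psiC n Y\<bar> \<le> B" unfolding bounded_real by blast
    define P where "P = {x \<in> topspace (preR_top n). orbitC n (bc_pre x) \<in> K}"
    have Kc: "closedin (tempC n) K" using compactin_imp_closedin[OF C(1) K] .
    have Pc: "closedin (preR_top n) P"
      unfolding P_def using closedin_continuous_map_preimage[OF cC Kc] by simp
    define J where "J = {i \<in> levi_dataR n. \<forall>j < fst (fst i). real (fst (snd i) j) \<le> B}"
    define S where "S = (\<lambda>i::((nat \<times> nat) \<times> ((nat \<Rightarrow> nat) \<times> (nat \<Rightarrow> bool))).
                         (\<Pi>\<^sub>E j\<in>{..<fst (fst i) + snd (fst i)}. {-B..B}))"
    define M where "M = nat \<lfloor>B\<rfloor>"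
    have Jsub: "J \<subseteq> (\<Union>q\<in>{..n}. \<Union>r\<in>{..n}. (\<lambda>(a,e). ((q,r),(a,e))) `
                   ((\<Pi>\<^sub>E j\<in>{..<q}. {1..M}) \<times> (\<Pi>\<^sub>E j\<in>{..<r}. (UNIV :: bool set))))"
    proof
      fix i assume i: "i \<in> J"
      obtain q r a e where iq: "i = ((q,r),(a,e))" by (metis prod.collapse)
      have h: "2*q + r = n" "a \<in> {..<q} \<rightarrow>\<^sub>E {1..}" "e \<in> {..<r} \<rightarrow>\<^sub>E UNIV" "\<forall>j<q. real (a j) \<le> B"
        using i unfolding J_def iq levi_dataR_def by auto
      have "a j \<le> M" if "j < q" for j
      proof -
        have "int (a j) \<le> \<lfloor>B\<rfloor>" using h(4) that by (simp add: le_floor_iff)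
        then have "nat (int (a j)) \<le> nat \<lfloor>B\<rfloor>" by (rule nat_mono)
        then show ?thesis unfolding M_def by simp
      qed
      then have "a \<in> (\<Pi>\<^sub>E j\<in>{..<q}. {1..M})" using h(2) by (auto simp: PiE_iff)
      then show "i \<in> (\<Union>q\<in>{..n}. \<Union>r\<in>{..n}. (\<lambda>(a,e). ((q,r),(a,e))) `
                   ((\<Pi>\<^sub>E j\<in>{..<q}. {1..M}) \<times> (\<Pi>\<^sub>E j\<in>{..<r}. (UNIV :: bool set))))"
        using h(1,3) unfolding iq by force
    qed
    have Jfin: "finite J"
      by (rule finite_subset[OF Jsub]) (intro finite_UN_I finite_imageI finite_cartesian_product finite_PiE; simp)
    have SJc: "compactin (preR_top n) (Sigma J S)"
      unfolding preR_top_def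
    proof (rule compactin_sum_Sigma[OF Jfin])
      show "J \<subseteq> levi_dataR n" unfolding J_def by auto
      fix i assume "i \<in> J"
      obtain q r a e where iq: "i = ((q,r),(a,e))" by (metis prod.collapse)
      have "compactin (XM_top (q+r)) (\<Pi>\<^sub>E j\<in>{..<q+r}. {-B..B})"
        unfolding XM_top_def by (simp add: compactin_PiE)
      then show "compactin ((\<lambda>((q, r), _). XM_top (q + r)) i) (S i)"
        unfolding iq S_def by simp
    qed
    have PS: "P \<subseteq> Sigma J S"
    proof
      fix x assume xP: "x \<in> P"
      obtain q r a e t where x: "x = (((q,r),(a,e)),t)" by (metis prod.collapse)
      have xt: "x \<in> topspace (preR_top n)" and xK: "orbitC n (bc_pre x) \<in> K" using xP unfolding P_def by auto
      then have h: "2*q + r = n" "a \<in> {..<q} \<rightarrow>\<^sub>E {1..}" "e \<in> {..<r} \<rightarrow>\<^sub>E UNIV" "t \<in> (\<Pi>\<^sub>E i\<in>{..<q+r}. UNIV)"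
        unfolding x topspace_preR by auto
      have "phiC n (bc_pre x) \<le> B" using B[OF xK] psiC_orbit[of n "bc_pre x"] by simp
      define f where "f = (\<lambda>j. \<bar>real_of_int (fst (bc_pre x) j)\<bar> + \<bar>snd (bc_pre x) j\<bar>)"
      have sumB: "(\<Sum>j<n. f j) \<le> B" using \<open>phiC n (bc_pre x) \<le> B\<close> unfolding phiC_def f_def .
      have fB: "f j \<le> B" if "j < n" for j
      proof -
        have "f j \<le> (\<Sum>j<n. f j)"
          by (rule member_le_sum) (use that in \<open>auto simp: f_def\<close>)
        then show ?thesis using sumB by simp
      qed
      have a1: "real (a i) \<le> B \<and> \<bar>t i\<bar> \<le> B" if "i < q" for i
      proof -
        have "2*i < n" using that h(1) by auto
        then have "f (2*i) \<le> B" by (rule fB)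
        moreover have "f (2*i) = real (a i) + 2 * \<bar>t i\<bar>"
          using that unfolding f_def x bc_pre_def by simp
        ultimately show ?thesis using abs_ge_zero[of "t i"] of_nat_0_le_iff[of "a i"] by linarith
      qed
      have a2: "\<bar>t j\<bar> \<le> B" if "q \<le> j" "j < q + r" for j
      proof -
        have "j + q < n" using that h(1) by auto
        then have "f (j + q) \<le> B" by (rule fB)
        moreover have "f (j + q) = 2 * \<bar>t j\<bar>"
          using that unfolding f_def x bc_pre_def by simp
        ultimately show ?thesis by simp
      qed
      have tS: "t \<in> (\<Pi>\<^sub>E j\<in>{..<q+r}. {-B..B})"
      proof -
        have "\<bar>t j\<bar> \<le> B" if "j < q + r" for j
          using a1[of j] a2[of j] that by (cases "j < q") auto
        then have "\<forall>j\<in>{..<q+r}. t j \<in> {-B..B}" by (auto simp: abs_le_iff) (smt (verit))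
        then show ?thesis using h(4) by (auto simp: PiE_iff)
      qed
      have "((q,r),(a,e)) \<in> J"
        unfolding J_def levi_dataR_def using h a1 by auto
      then show "x \<in> Sigma J S" unfolding x S_def using tS by simp
    qed
    have Pcomp: "compactin (preR_top n) P" by (rule closed_compactin[OF SJc PS Pc])
    have eq: "{x \<in> topspace (tempR n). BC n x \<in> K} = orbitR ` P"
    proof
      show "{x \<in> topspace (tempR n). BC n x \<in> K} \<subseteq> orbitR ` P"
      proof
        fix Y assume "Y \<in> {x \<in> topspace (tempR n). BC n x \<in> K}"
        then obtain x where x: "x \<in> topspace (preR_top n)" "Y = orbitR x" "BC n Y \<in> K" unfolding topR by auto
        then have "x \<in> P" unfolding P_def using BC_orbit[OF x(1)] by simp
        then show "Y \<in> orbitR ` P" using x by blast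
      qed
      show "orbitR ` P \<subseteq> {x \<in> topspace (tempR n). BC n x \<in> K}"
      proof
        fix Y assume "Y \<in> orbitR ` P"
        then obtain x where x: "x \<in> P" "Y = orbitR x" by auto
        then have "x \<in> topspace (preR_top n)" "orbitC n (bc_pre x) \<in> K" unfolding P_def by auto
        then show "Y \<in> {x \<in> topspace (tempR n). BC n x \<in> K}"
          using x BC_orbit unfolding topR by auto
      qed
    qed
    show ?thesis unfolding eq
      using image_compactin[OF Pcomp quotient_imp_continuous_map[OF qR]] .
  qed
  have fim: "BC n \<in> topspace (tempR n) \<rightarrow> topspace (tempC n)"
    using cont unfolding continuous_map_def by blast
  have proper: "proper_map (tempR n) (tempC n) (BC n)"
    using compact_imp_proper_map[OF locally_compact_imp_k_space[OF C(2)] Hausdorff_imp_kc_space[OF C(1)]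
        fim disjI1[OF cont] comp] .
  show ?thesis using R C cont proper comp by blast
qed

theorem proposition6p1:
  fixes n :: nat
  assumes "n \<ge> 1"
  shows "locally_compact_space (tempR n) \<and> Hausdorff_space (tempR n) \<and>
         locally_compact_space (tempC n) \<and> Hausdorff_space (tempC n) \<and>
         continuous_map (tempR n) (tempC n) (BC n) \<and>
         proper_map (tempR n) (tempC n) (BC n) \<and>
         (\<forall>K. compactin (tempC n) K \<longrightarrow>
              compactin (tempR n) {x \<in> topspace (tempR n). BC n x \<in> K})"
  using main_result[of n] .

end
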